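(* In $\mathrm{HMF}(\mathbb{C}^2,\Gamma_W,W)$ the objects $K_{y,1},\dots,K_{y,q-1}$ are exceptional (graded endomorphisms are scalar multiples of the identity in degree $0$) and pairwise orthogonal.
   Context: Let $p,q\ge2$ be integers and $W=x^py+y^q$. Let $L$ be the abelian group generated by $\vec x,\vec y,\vec c$ modulo $p\vec x+\vec y=q\vec y=\vec c$; $S=\mathbb{C}[x,y]$ is $L$-graded with $\deg x=\vec x$, $\deg y=\vec y$, and $R=S/(W)$; $M(l)_k=M_{k+l}$. $\mathrm{HMF}(\mathbb{C}^2,\Gamma_W,W)$ is the homotopy category of $L$-graded matrix factorisations of $W$, equivalent to $D^b(\mathrm{gr}R)/\mathrm{Perf}(\mathrm{gr}R)$, in which a finitely generated $L$-graded $R$-module is identified with its stabilisation; $\mathrm{Hom}^n(X,Y)=\mathrm{Hom}(X,Y[n])$. $K_y=R/(y)$ and $K_{y,j}=K_y((j+1-q)\vec y)$. *)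

theory Defs
  imports Complex_Main "HOL-Computational_Algebra.Polynomial"
begin

text \<open>S = C[x,y] is modelled as complex poly poly (outer variable x, inner variable y);
 the monomial x^a y^b has coefficient coeff (coeff f a) b.
 The grading group L = <x,y,c | p x + y = q y = c> is modelled by int pairs (a,b) = a x + b y
 modulo the relation p x = (q-1) y, i.e. modulo the subgroup generated by (p, -(q-1));
 c is represented by (0,q).\<close>

type_synonym deg = "int \<times> int"
type_synonym pol = "complex poly poly"
type_synonym mat = "nat \<Rightarrow> nat \<Rightarrow> pol"

definition Xv :: pol where "Xv = [:0, 1:]"
definition Yv :: pol where "Yv = [:[:0, 1:]:]"
definition Wp :: "nat \<Rightarrow> nat \<Rightarrow> pol" where "Wp p q = Xv ^ p * Yv + Yv ^ q"

definition Leq :: "nat \<Rightarrow> nat \<Rightarrow> deg \<Rightarrow> deg \<Rightarrow> bool" where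
  "Leq p q d e \<longleftrightarrow> (\<exists>k::int. fst d - fst e = k * int p \<and> snd d - snd e = - k * (int q - 1))"

definition cdeg :: "nat \<Rightarrow> deg" where "cdeg q = (0, int q)"
definition ydeg :: deg where "ydeg = (0, 1)"

definition dadd :: "deg \<Rightarrow> deg \<Rightarrow> deg" where "dadd d e = (fst d + fst e, snd d + snd e)"
definition dsub :: "deg \<Rightarrow> deg \<Rightarrow> deg" where "dsub d e = (fst d - fst e, snd d - snd e)"
definition dscale :: "int \<Rightarrow> deg \<Rightarrow> deg" where "dscale m d = (m * fst d, m * snd d)"

definition homog :: "nat \<Rightarrow> nat \<Rightarrow> pol \<Rightarrow> deg \<Rightarrow> bool" where
  "homog p q f d \<longleftrightarrow> (\<forall>a b. coeff (coeff f a) b \<noteq> 0 \<longrightarrow> Leq p q (int a, int b) d)"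

text \<open>A degree-0 graded map from the free module (+)_j S(src!j) to (+)_i S(tgt!i):
 entry (i,j) is homogeneous of degree tgt!i - src!j.\<close>
definition hom_mat :: "nat \<Rightarrow> nat \<Rightarrow> mat \<Rightarrow> deg list \<Rightarrow> deg list \<Rightarrow> bool" where
  "hom_mat p q A src tgt \<longleftrightarrow>
     (\<forall>i<length tgt. \<forall>j<length src. homog p q (A i j) (dsub (tgt ! i) (src ! j)))"

definition mmul :: "nat \<Rightarrow> mat \<Rightarrow> mat \<Rightarrow> mat" where
  "mmul n A B = (\<lambda>i j. \<Sum>l<n. A i l * B l j)"

definition madd :: "mat \<Rightarrow> mat \<Rightarrow> mat" where "madd A B = (\<lambda>i j. A i j + B i j)"
definition mneg :: "mat \<Rightarrow> mat" where "mneg A = (\<lambda>i j. - A i j)"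

definition meq :: "nat \<Rightarrow> nat \<Rightarrow> mat \<Rightarrow> mat \<Rightarrow> bool" where
  "meq r c A B \<longleftrightarrow> (\<forall>i<r. \<forall>j<c. A i j = B i j)"

definition smat :: "pol \<Rightarrow> mat" where "smat a = (\<lambda>i j. if i = j then a else 0)"

text \<open>An L-graded matrix factorisation F0 --f0--> F1 --f1--> F0(c).\<close>
record mf =
  d0 :: "deg list"
  d1 :: "deg list"
  f0 :: mat
  f1 :: mat

definition twistd :: "deg \<Rightarrow> deg list \<Rightarrow> deg list" where
  "twistd l ds = map (dadd l) ds"

definition is_mf :: "nat \<Rightarrow> nat \<Rightarrow> mf \<Rightarrow> bool" where
  "is_mf p q X \<longleftrightarrow>
     hom_mat p q (f0 X) (d0 X) (d1 X) \<and>
     hom_mat p q (f1 X) (d1 X) (twistd (cdeg q) (d0 X)) \<and>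
     meq (length (d0 X)) (length (d0 X)) (mmul (length (d1 X)) (f1 X) (f0 X)) (smat (Wp p q)) \<and>
     meq (length (d1 X)) (length (d1 X)) (mmul (length (d0 X)) (f0 X) (f1 X)) (smat (Wp p q))"

definition mf_twist :: "deg \<Rightarrow> mf \<Rightarrow> mf" where
  "mf_twist l X = X\<lparr>d0 := twistd l (d0 X), d1 := twistd l (d1 X)\<rparr>"

definition mf_shift1 :: "nat \<Rightarrow> mf \<Rightarrow> mf" where
  "mf_shift1 q X = \<lparr>d0 = d1 X, d1 = twistd (cdeg q) (d0 X), f0 = mneg (f1 X), f1 = mneg (f0 X)\<rparr>"

text \<open>X[n] for n in Z, using [2] = (c).\<close>
definition mf_shift :: "nat \<Rightarrow> int \<Rightarrow> mf \<Rightarrow> mf" where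
  "mf_shift q n X =
     (if even n then mf_twist (dscale (n div 2) (cdeg q)) X
      else mf_shift1 q (mf_twist (dscale (n div 2) (cdeg q)) X))"

definition is_mor :: "nat \<Rightarrow> nat \<Rightarrow> mf \<Rightarrow> mf \<Rightarrow> mat \<times> mat \<Rightarrow> bool" where
  "is_mor p q X Y \<phi> \<longleftrightarrow>
     hom_mat p q (fst \<phi>) (d0 X) (d0 Y) \<and> hom_mat p q (snd \<phi>) (d1 X) (d1 Y) \<and>
     meq (length (d1 Y)) (length (d0 X))
         (mmul (length (d1 X)) (snd \<phi>) (f0 X)) (mmul (length (d0 Y)) (f0 Y) (fst \<phi>)) \<and>
     meq (length (d0 Y)) (length (d1 X))
         (mmul (length (d0 X)) (fst \<phi>) (f1 X)) (mmul (length (d1 Y)) (f1 Y) (snd \<phi>))"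

definition nullhtp :: "nat \<Rightarrow> nat \<Rightarrow> mf \<Rightarrow> mf \<Rightarrow> mat \<times> mat \<Rightarrow> bool" where
  "nullhtp p q X Y \<phi> \<longleftrightarrow>
     (\<exists>h0 h1. hom_mat p q h0 (d0 X) (twistd (dscale (-1) (cdeg q)) (d1 Y)) \<and>
              hom_mat p q h1 (d1 X) (d0 Y) \<and>
      meq (length (d0 Y)) (length (d0 X)) (fst \<phi>)
          (madd (mmul (length (d1 Y)) (f1 Y) h0) (mmul (length (d1 X)) h1 (f0 X))) \<and>
      meq (length (d1 Y)) (length (d1 X)) (snd \<phi>)
          (madd (mmul (length (d0 Y)) (f0 Y) h1) (mmul (length (d0 X)) h0 (f1 X))))"

definition homotopic :: "nat \<Rightarrow> nat \<Rightarrow> mf \<Rightarrow> mf \<Rightarrow> mat \<times> mat \<Rightarrow> mat \<times> mat \<Rightarrow> bool" where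
  "homotopic p q X Y \<phi> \<psi> \<longleftrightarrow>
     nullhtp p q X Y (madd (fst \<phi>) (mneg (fst \<psi>)), madd (snd \<phi>) (mneg (snd \<psi>)))"

definition scal_id :: "complex \<Rightarrow> mat \<times> mat" where
  "scal_id a = (smat [:[:a:]:], smat [:[:a:]:])"

text \<open>Stabilisation of K_y = R/(y) = coker(y : S(-y) -> S): the MF
 S(-c) --(x^p + y^(q-1))--> S(-y) --y--> S.\<close>
definition Ky :: "nat \<Rightarrow> nat \<Rightarrow> mf" where
  "Ky p q = \<lparr>d0 = [dscale (-1) (cdeg q)], d1 = [dscale (-1) ydeg],
             f0 = (\<lambda>_ _. Xv ^ p + Yv ^ (q - 1)), f1 = (\<lambda>_ _. Yv)\<rparr>"

definition Kyj :: "nat \<Rightarrow> nat \<Rightarrow> nat \<Rightarrow> mf" where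
  "Kyj p q j = mf_twist (dscale (int j + 1 - int q) ydeg) (Ky p q)"

end

theory Submission imports Defs begin

definition KK :: "nat \<Rightarrow> nat \<Rightarrow> int \<Rightarrow> mf" where
  "KK p q t = \<lparr>d0 = [(0, t - int q)], d1 = [(0, t - 1)],
     f0 = (\<lambda>_ _. Xv ^ p + Yv ^ (q - 1)), f1 = (\<lambda>_ _. Yv)\<rparr>"

lemma Kyj_KK: "Kyj p q j = KK p q (int j + 1 - int q)"
  by (simp add: Kyj_def KK_def Ky_def mf_twist_def twistd_def dadd_def dscale_def cdeg_def ydeg_def)

lemma shift_KK: "mf_shift q n (KK p q t) = (if even n then KK p q (t + n div 2 * int q)
   else mf_shift1 q (KK p q (t + n div 2 * int q)))"
  by (simp add: mf_shift_def KK_def mf_twist_def twistd_def dadd_def dscale_def cdeg_def ydeg_def algebra_simps)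

lemma mmul1: "mmul (Suc 0) A B = (\<lambda>i j. A i 0 * B 0 j)"
  by (simp add: mmul_def)

lemma map_poly_hom_mult:
  fixes f :: "'a::comm_ring_1 \<Rightarrow> 'b::comm_ring_1"
  assumes add: "\<And>x y. f (x+y) = f x + f y" and mul: "\<And>x y. f (x*y) = f x * f y" and z: "f 0 = 0"
  shows "map_poly f (p*q) = map_poly f p * map_poly f q"
proof (induction p)
  case 0 then show ?case by simp
next
  case (pCons a p)
  have madd: "map_poly f (A + B) = map_poly f A + map_poly f B" for A B
    by (intro poly_eqI) (simp add: coeff_map_poly z add)
  show ?case
    by (simp add: madd map_poly_smult[of f, OF z mul] map_poly_pCons[of f, OF z] pCons.IH z)
qed

lemma Leq_iff: "Leq p q (a,b) (c,d) \<longleftrightarrow> (\<exists>k::int. a - c = k * int p \<and> b - d = - k * (int q - 1))"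
  by (simp add: Leq_def)


lemma Xv_pow: "Xv ^ n = monom 1 n"
  by (simp add: Xv_def monom_altdef)

lemma Yv_pow: "Yv ^ n = [:monom 1 n:]"
proof (induction n)
  case 0 then show ?case by (simp add: one_pCons)
next
  case (Suc n) then show ?case
    by (simp add: Yv_def monom_Suc)
qed

lemma coeff_Yvpow_mult: "coeff (Yv ^ n * G) a = monom 1 n * coeff G a"
  by (simp add: Yv_pow)

lemma coeff_Yv_mult: "coeff (Yv * G) a = [:0,1:] * coeff G a"
  by (simp add: Yv_def)

lemma coeff_Xvpow_mult: "coeff (Xv ^ n * G) a = (if a < n then 0 else coeff G (a - n))"
  by (simp add: Xv_pow coeff_monom_mult)

lemma split_y: "(c::complex poly) = [:coeff c 0:] + [:0,1:] * poly_shift 1 c"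
  by (intro poly_eqI) (auto simp: coeff_pCons coeff_poly_shift split: nat.splits)

lemma split_y0: "coeff (c::complex poly) 0 = 0 \<Longrightarrow> c = [:0,1:] * poly_shift 1 c"
  using split_y[of c] by simp

lemma homog_diff: "homog p q f d \<Longrightarrow> homog p q g d \<Longrightarrow> homog p q (f - g) d"
  unfolding homog_def by (metis coeff_diff diff_self diff_zero)

lemma homog_zero: "homog p q 0 d"
  unfolding homog_def by simp

lemma homog_deg: "homog p q f d \<Longrightarrow> d = e \<Longrightarrow> homog p q f e"
  by simp


lemma core:
  fixes F :: pol and \<delta> :: int
  assumes hF: "homog p q F (0,\<delta>)" and c0: "coeff (coeff F 0) 0 = 0" and q2: "q \<ge> 2" and p1: "p \<ge> 1"
  shows "\<exists>h0 h1. F = Yv * h0 + h1 * (Xv ^ p + Yv ^ (q - 1)) \<and>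
           homog p q h0 (0, \<delta> - 1) \<and> homog p q h1 (0, \<delta> - (int q - 1))"
proof -
  define G :: pol where "G = map_poly (\<lambda>c. [:coeff c 0:]) F"
  define B where "B = poly_shift p G"
  define H where "H = map_poly (poly_shift 1) F"
  have cG: "coeff G a = [:coeff (coeff F a) 0:]" for a
    by (simp add: G_def coeff_map_poly)
  have cB: "coeff B a = [:coeff (coeff F (a + p)) 0:]" for a
    by (simp add: B_def coeff_poly_shift cG)
  have cH: "coeff H a = poly_shift 1 (coeff F a)" for a
    by (simp add: H_def coeff_map_poly)
  have FGH: "F = G + Yv * H"
  proof (rule poly_eqI)
    fix a
    have "coeff F a = coeff G a + coeff (Yv * H) a"
      using split_y[of "coeff F a"] by (simp only: cG cH coeff_Yv_mult)
    then show "coeff F a = coeff (G + Yv * H) a" by simp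
  qed
  have GB: "G = Xv ^ p * B"
  proof (rule poly_eqI)
    fix a
    show "coeff G a = coeff (Xv ^ p * B) a"
    proof (cases "a < p")
      case True
      have "coeff (coeff F a) 0 = 0"
      proof (cases "a = 0")
        case True then show ?thesis using c0 by simp
      next
        case False
        show ?thesis
        proof (rule ccontr)
          assume "coeff (coeff F a) 0 \<noteq> 0"
          with hF obtain k where "int a = k * int p" "0 - \<delta> = - k * (int q - 1)"
            unfolding homog_def Leq_iff by fastforce
          moreover have "0 < int a" "int a < int p" using False True by auto
          ultimately show False
          proof (cases "k \<le> 0")
            case True then have "k * int p \<le> 0" by (simp add: mult_nonpos_nonneg)
            then show False using \<open>int a = k * int p\<close> \<open>0 < int a\<close> by linarith
          next
            case False then have "1 * int p \<le> k * int p" by (intro mult_right_mono) auto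
            then show False using \<open>int a = k * int p\<close> \<open>int a < int p\<close> by linarith
          qed
        qed
      qed
      then show ?thesis using True by (simp add: cG coeff_Xvpow_mult)
    next
      case False
      then show ?thesis by (simp add: cG cB coeff_Xvpow_mult)
    qed
  qed
  have Ypow: "Yv ^ (q - 1) = Yv * Yv ^ (q - 2)"
    using q2 by (metis Suc_diff_Suc Suc_le_eq numeral_2_eq_2 one_add_one diff_diff_left power_Suc
          Suc_1 less_le_trans lessI)
  have eq: "F = Yv * (H - Yv ^ (q - 2) * B) + B * (Xv ^ p + Yv ^ (q - 1))"
    using FGH GB Ypow by (simp add: algebra_simps)
  have hB: "homog p q B (0, \<delta> - (int q - 1))"
    unfolding homog_def
  proof (intro allI impI)
    fix a b assume "coeff (coeff B a) b \<noteq> 0"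
    then have b0: "b = 0" and nz: "coeff (coeff F (a + p)) 0 \<noteq> 0"
      by (auto simp: cB coeff_pCons split: nat.splits)
    from nz hF obtain k where "int (a + p) - 0 = k * int p" "0 - \<delta> = - k * (int q - 1)"
      unfolding homog_def Leq_iff by fastforce
    then show "Leq p q (int a, int b) (0, \<delta> - (int q - 1))"
      unfolding Leq_iff b0 by (intro exI[of _ "k - 1"]) (auto simp: algebra_simps)
  qed
  have hH: "homog p q H (0, \<delta> - 1)"
    unfolding homog_def
  proof (intro allI impI)
    fix a b assume "coeff (coeff H a) b \<noteq> 0"
    then have nz: "coeff (coeff F a) (b + 1) \<noteq> 0"
      by (simp add: cH coeff_poly_shift)
    from nz hF obtain k where "int a - 0 = k * int p" "int (b + 1) - \<delta> = - k * (int q - 1)"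
      unfolding homog_def Leq_iff by fastforce
    then show "Leq p q (int a, int b) (0, \<delta> - 1)"
      unfolding Leq_iff by (intro exI[of _ k]) (auto simp: algebra_simps)
  qed
  have hYB: "homog p q (Yv ^ (q - 2) * B) (0, \<delta> - 1)"
    unfolding homog_def
  proof (intro allI impI)
    fix a b assume "coeff (coeff (Yv ^ (q - 2) * B) a) b \<noteq> 0"
    then have "\<not> b < q - 2" and nz: "coeff (coeff B a) (b - (q - 2)) \<noteq> 0"
      by (auto simp: coeff_Yvpow_mult coeff_monom_mult split: if_splits)
    then have b0: "b = q - 2" and nz2: "coeff (coeff F (a + p)) 0 \<noteq> 0"
      by (auto simp: cB coeff_pCons split: nat.splits if_splits)
    from nz2 hF obtain k where "int (a + p) - 0 = k * int p" "0 - \<delta> = - k * (int q - 1)"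
      unfolding homog_def Leq_iff by fastforce
    then show "Leq p q (int a, int b) (0, \<delta> - 1)"
      unfolding Leq_iff b0 using q2 by (intro exI[of _ "k - 1"]) (auto simp: algebra_simps of_nat_diff)
  qed
  show ?thesis
    by (intro exI conjI, rule eq, rule homog_diff[OF hH hYB], rule hB)
qed


lemma Yv_nz: "Yv \<noteq> 0"
  by (simp add: Yv_def)

lemma even_case:
  assumes mor: "is_mor p q (KK p q s) (KK p q t) \<phi>" and q2: "q \<ge> 2" and p1: "p \<ge> 1"
  defines "c \<equiv> (if s = t then coeff (coeff (fst \<phi> 0 0) 0) 0 else 0)"
  shows "nullhtp p q (KK p q s) (KK p q t)
           (madd (fst \<phi>) (mneg (smat [:[:c:]:])), madd (snd \<phi>) (mneg (smat [:[:c:]:])))"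
proof -
  define P where "P = fst \<phi> 0 0"
  have m1: "hom_mat p q (fst \<phi>) [(0, s - int q)] [(0, t - int q)]"
    using mor unfolding is_mor_def KK_def by simp
  have m2: "meq (Suc 0) (Suc 0) (mmul (Suc 0) (fst \<phi>) (\<lambda>_ _. Yv)) (mmul (Suc 0) (\<lambda>_ _. Yv) (snd \<phi>))"
    using mor unfolding is_mor_def KK_def by simp
  have hP: "homog p q P (0, t - s)"
    using m1 unfolding hom_mat_def dsub_def P_def by simp
  have e4: "P * Yv = Yv * snd \<phi> 0 0"
    using m2 unfolding meq_def mmul1 P_def by simp
  then have P2: "snd \<phi> 0 0 = P" using Yv_nz by (simp add: mult.commute)
  define F where "F = P - [:[:c:]:]"
  have hF: "homog p q F (0, t - s)"
  proof (cases "s = t")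
    case True
    have "homog p q [:[:c:]:] (0, t - s)"
      unfolding homog_def using True
      by (auto simp: coeff_pCons Leq_iff split: nat.splits)
    then show ?thesis unfolding F_def by (rule homog_diff[OF hP])
  next
    case False then show ?thesis using hP by (simp add: F_def c_def)
  qed
  have c0: "coeff (coeff F 0) 0 = 0"
  proof (cases "s = t")
    case True then show ?thesis by (simp add: F_def c_def P_def)
  next
    case False
    show ?thesis
    proof (rule ccontr)
      assume "coeff (coeff F 0) 0 \<noteq> 0"
      with hF have "Leq p q (int 0, int 0) (0, t - s)" unfolding homog_def by blast
      then obtain k where k1: "0 = k * int p" and k2: "0 - (t - s) = - k * (int q - 1)"
        unfolding Leq_iff by auto
      from k1 p1 have "k = 0" by simp
      with k2 False show False by simp
    qed
  qed
  obtain h0 h1 where eq: "F = Yv * h0 + h1 * (Xv ^ p + Yv ^ (q - 1))"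
    and h0: "homog p q h0 (0, t - s - 1)" and h1: "homog p q h1 (0, t - s - (int q - 1))"
    using core[OF hF c0 q2 p1] by blast
  show ?thesis
    unfolding nullhtp_def
    apply (rule exI[of _ "\<lambda>_ _. h0"], rule exI[of _ "\<lambda>_ _. h1"])
    apply (intro conjI)
    subgoal using h0 unfolding hom_mat_def KK_def twistd_def dscale_def cdeg_def dadd_def dsub_def
      by (simp add: homog_deg)
    subgoal using h1 unfolding hom_mat_def KK_def dsub_def
      by (simp add: homog_deg)
    subgoal using eq unfolding meq_def KK_def mmul1 madd_def mneg_def smat_def F_def P_def
      by (simp add: mmul1)
    subgoal using eq P2 unfolding meq_def KK_def mmul1 madd_def mneg_def smat_def F_def P_def
      by (simp add: mmul1 mult.commute)
    done
qed


lemma odd_case: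
  assumes mor: "is_mor p q (KK p q s) (mf_shift1 q (KK p q t)) \<phi>" and q2: "q \<ge> 2" and p1: "p \<ge> 1"
  shows "nullhtp p q (KK p q s) (mf_shift1 q (KK p q t)) \<phi>"
proof -
  define P0 where "P0 = fst \<phi> 0 0"
  define P1 where "P1 = snd \<phi> 0 0"
  define u :: pol where "u = Xv ^ p + Yv ^ (q - 1)"
  have m1: "hom_mat p q (snd \<phi>) [(0, s - 1)] [dadd (cdeg q) (0, t - int q)]"
    using mor unfolding is_mor_def KK_def mf_shift1_def twistd_def by simp
  have m3: "meq (Suc 0) (Suc 0) (mmul (Suc 0) (snd \<phi>) (\<lambda>_ _. u)) (mmul (Suc 0) (mneg (\<lambda>_ _. Yv)) (fst \<phi>))"
    using mor unfolding is_mor_def KK_def mf_shift1_def twistd_def u_def by simp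
  have hP1: "homog p q P1 (0, t - s + 1)"
    using m1 unfolding hom_mat_def dsub_def dadd_def cdeg_def P1_def
    by (simp add: homog_deg algebra_simps)
  have e3: "P1 * u = - Yv * P0"
    using m3 unfolding meq_def P0_def P1_def by (simp add: mmul1 mneg_def)
  define \<psi> :: "pol \<Rightarrow> complex poly" where "\<psi> = map_poly (\<lambda>c. coeff c 0)"
  have \<psi>mult: "\<psi> (A * B) = \<psi> A * \<psi> B" for A B
    unfolding \<psi>_def by (rule map_poly_hom_mult) (simp_all add: coeff_mult_0)
  have \<psi>Y: "\<psi> (- Yv) = 0"
    unfolding \<psi>_def by (rule poly_eqI) (simp add: coeff_map_poly Yv_def coeff_pCons split: nat.splits)
  have \<psi>u: "\<psi> u = monom 1 p"
    unfolding \<psi>_def u_def using q2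
    by (intro poly_eqI) (simp add: coeff_map_poly Xv_pow Yv_pow coeff_pCons coeff_monom split: nat.splits)
  have "\<psi> P1 * monom 1 p = \<psi> (P1 * u)" by (simp only: \<psi>mult \<psi>u)
  also have "\<dots> = \<psi> (- Yv * P0)" by (rule arg_cong[OF e3])
  also have "\<dots> = 0" by (simp only: \<psi>mult \<psi>Y mult_zero_left)
  finally have "\<psi> P1 * monom 1 p = 0" .
  then have "\<psi> P1 = 0" by simp
  then have c0: "coeff (coeff P1 a) 0 = 0" for a
  proof -
    have "coeff (\<psi> P1) a = 0" using \<open>\<psi> P1 = 0\<close> by simp
    then show ?thesis unfolding \<psi>_def by (subst (asm) coeff_map_poly) simp_all
  qed
  define g where "g = map_poly (poly_shift 1) P1"
  have P1g: "P1 = Yv * g"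
  proof (rule poly_eqI)
    fix a show "coeff P1 a = coeff (Yv * g) a"
      using split_y0[OF c0[of a]] by (simp add: coeff_Yv_mult g_def coeff_map_poly)
  qed
  have "Yv * (g * u) = Yv * (- P0)" using e3 P1g by (simp add: algebra_simps)
  then have "Yv * (g * u + P0) = 0" by (simp add: algebra_simps)
  then have "g * u + P0 = 0" using Yv_nz by simp
  then have P0g: "P0 = - (g * u)" by (metis neg_eq_iff_add_eq_0)
  have hg: "homog p q g (0, t - s)"
    unfolding homog_def
  proof (intro allI impI)
    fix a b assume "coeff (coeff g a) b \<noteq> 0"
    then have nz: "coeff (coeff P1 a) (b + 1) \<noteq> 0"
      by (simp add: g_def coeff_map_poly coeff_poly_shift)
    with hP1 have "Leq p q (int a, int (b + 1)) (0, t - s + 1)" unfolding homog_def by blast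
    then obtain k where "int a - 0 = k * int p" "int (b + 1) - (t - s + 1) = - k * (int q - 1)"
      unfolding Leq_iff by blast
    then show "Leq p q (int a, int b) (0, t - s)"
      unfolding Leq_iff by (intro exI[of _ k]) (auto simp: algebra_simps)
  qed
  show ?thesis
    unfolding nullhtp_def
    apply (rule exI[of _ "\<lambda>_ _. g"], rule exI[of _ "\<lambda>_ _. 0"])
    apply (intro conjI)
    subgoal using hg unfolding hom_mat_def KK_def mf_shift1_def twistd_def dscale_def cdeg_def dadd_def dsub_def
      by (simp add: homog_deg algebra_simps)
    subgoal unfolding hom_mat_def by (simp add: homog_zero)
    subgoal using P0g unfolding meq_def KK_def mf_shift1_def u_def P0_def twistd_def
      by (simp add: mmul1 madd_def mneg_def algebra_simps)
    subgoal using P1g unfolding meq_def KK_def mf_shift1_def P1_def twistd_def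
      by (simp add: mmul1 madd_def mneg_def mult.commute)
    done
qed


lemma madd_zero: "madd A (mneg (smat 0)) = A"
  by (simp add: madd_def mneg_def smat_def fun_eq_iff)

lemma even_null:
  assumes "is_mor p q (KK p q s) (KK p q t) \<phi>" "q \<ge> 2" "p \<ge> 1" "s \<noteq> t"
  shows "nullhtp p q (KK p q s) (KK p q t) \<phi>"
  using even_case[OF assms(1-3)] assms(4) by (simp add: madd_zero)

lemma even_same:
  assumes "is_mor p q (KK p q t) (KK p q t) \<phi>" "q \<ge> 2" "p \<ge> 1"
  shows "\<exists>a. homotopic p q (KK p q t) (KK p q t) \<phi> (scal_id a)"
  using even_case[OF assms(1-3)] unfolding homotopic_def scal_id_def by auto

lemma Yv0: "coeff (coeff Yv 0) 0 = 0"
  by (simp add: Yv_def)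

lemma id_not_null:
  assumes "q \<ge> 2" "p \<ge> 1"
  shows "\<not> nullhtp p q (KK p q t) (KK p q t) (scal_id 1)"
proof
  assume "nullhtp p q (KK p q t) (KK p q t) (scal_id 1)"
  then obtain h0 h1 where "meq (length (d0 (KK p q t))) (length (d0 (KK p q t))) (fst (scal_id 1))
          (madd (mmul (length (d1 (KK p q t))) (f1 (KK p q t)) h0) (mmul (length (d1 (KK p q t))) h1 (f0 (KK p q t))))"
    unfolding nullhtp_def by blast
  then have e: "[:[:1:]:] = Yv * h0 0 0 + h1 0 0 * (Xv ^ p + Yv ^ (q - 1))"
    by (simp add: meq_def KK_def mmul1 madd_def scal_id_def smat_def)
  have "coeff (coeff ([:[:1:]:] :: pol) 0) 0 = coeff (coeff (Yv * h0 0 0 + h1 0 0 * (Xv ^ p + Yv ^ (q - 1))) 0) 0"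
    by (subst e) (rule refl)
  also have "\<dots> = 0"
    using assms by (simp add: coeff_mult_0 Yv0 Xv_pow Yv_pow)
  finally show False by simp
qed

lemma arith_ij:
  fixes i j :: nat and m :: int
  assumes "1 \<le> i" "i \<le> q - 1" "1 \<le> j" "j \<le> q - 1" "i \<noteq> j"
  shows "int i \<noteq> int j + m * int q"
proof (cases "m = 0")
  case True then show ?thesis using assms by simp
next
  case False
  show ?thesis
  proof (cases "m > 0")
    case True
    then have "1 * int q \<le> m * int q" by (intro mult_right_mono) auto
    then show ?thesis using assms by linarith
  next
    case F2: False
    with False have "m \<le> -1" by simp
    then have "m * int q \<le> (-1) * int q" by (intro mult_right_mono) auto
    then show ?thesis using assms by linarith
  qed
qed

theorem lemma4p2:
  fixes p q :: nat
  assumes "p \<ge> 2" and "q \<ge> 2"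
  shows "(\<forall>j\<in>{1..q-1}.
            \<not> nullhtp p q (Kyj p q j) (Kyj p q j) (scal_id 1) \<and>
            (\<forall>\<phi>. is_mor p q (Kyj p q j) (Kyj p q j) \<phi> \<longrightarrow>
                 (\<exists>a::complex. homotopic p q (Kyj p q j) (Kyj p q j) \<phi> (scal_id a))) \<and>
            (\<forall>n::int. n \<noteq> 0 \<longrightarrow> (\<forall>\<phi>. is_mor p q (Kyj p q j) (mf_shift q n (Kyj p q j)) \<phi> \<longrightarrow>
                 nullhtp p q (Kyj p q j) (mf_shift q n (Kyj p q j)) \<phi>))) \<and>
         (\<forall>i\<in>{1..q-1}. \<forall>j\<in>{1..q-1}. i \<noteq> j \<longrightarrow>
            (\<forall>n::int. \<forall>\<phi>. is_mor p q (Kyj p q i) (mf_shift q n (Kyj p q j)) \<phi> \<longrightarrow>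
                 nullhtp p q (Kyj p q i) (mf_shift q n (Kyj p q j)) \<phi>))"
proof -
  have p1: "p \<ge> 1" and q2: "q \<ge> 2" using assms by auto
  have gen: "nullhtp p q (KK p q s) (mf_shift q n (KK p q t)) \<phi>"
    if mor: "is_mor p q (KK p q s) (mf_shift q n (KK p q t)) \<phi>" and ne: "s \<noteq> t + n div 2 * int q"
    for s t n \<phi>
  proof (cases "even n")
    case True
    then show ?thesis using mor even_null[OF _ q2 p1 ne] by (simp add: shift_KK)
  next
    case False
    then show ?thesis using mor odd_case[OF _ q2 p1] by (simp add: shift_KK)
  qed
  show ?thesis
    unfolding Kyj_KK
  proof (intro conjI ballI allI impI)
    fix j assume "j \<in> {1..q-1}"
    show "\<not> nullhtp p q (KK p q (int j + 1 - int q)) (KK p q (int j + 1 - int q)) (scal_id 1)"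
      by (rule id_not_null[OF q2 p1])
  next
    fix j \<phi> assume "j \<in> {1..q-1}" "is_mor p q (KK p q (int j + 1 - int q)) (KK p q (int j + 1 - int q)) \<phi>"
    then show "\<exists>a. homotopic p q (KK p q (int j + 1 - int q)) (KK p q (int j + 1 - int q)) \<phi> (scal_id a)"
      using even_same[OF _ q2 p1] by blast
  next
    fix j n \<phi> assume "j \<in> {1..q-1}" "n \<noteq> 0"
      and mor: "is_mor p q (KK p q (int j + 1 - int q)) (mf_shift q n (KK p q (int j + 1 - int q))) \<phi>"
    show "nullhtp p q (KK p q (int j + 1 - int q)) (mf_shift q n (KK p q (int j + 1 - int q))) \<phi>"
    proof (cases "even n")
      case True
      then have "n div 2 \<noteq> 0" using \<open>n \<noteq> 0\<close> by auto
      then have "n div 2 * int q \<noteq> 0" using q2 by simp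
      then show ?thesis by (intro gen[OF mor]) simp
    next
      case False
      then show ?thesis using mor odd_case[OF _ q2 p1] by (simp add: shift_KK)
    qed
  next
    fix i j n \<phi> assume ij: "i \<in> {1..q-1}" "j \<in> {1..q-1}" "i \<noteq> j"
      and mor: "is_mor p q (KK p q (int i + 1 - int q)) (mf_shift q n (KK p q (int j + 1 - int q))) \<phi>"
    have "int i + 1 - int q \<noteq> int j + 1 - int q + n div 2 * int q"
      using arith_ij[of i q j "n div 2"] ij by auto
    then show "nullhtp p q (KK p q (int i + 1 - int q)) (mf_shift q n (KK p q (int j + 1 - int q))) \<phi>"
      by (rule gen[OF mor])
  qed
qed

end
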